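(* Assume $n\ge3$. Then every zero of $F$ that lies strictly between two zeros of $g$ (i.e. between two singularities of $F$) is not acceptable.
   Context: Data: an integer $N\ge 2$, reals $x_A<x_B$, $R=x_B-x_A$, and bins $i=1,\dots,N$ with widths $\Delta x_i>0$ and centers $x_i$ that tile $[x_A,x_B]$ contiguously in increasing order, so that $x_1-x_A=\Delta x_1/2$, $x_N-x_A=R-\Delta x_N/2$ and $0<x_1-x_A<\dots<x_N-x_A<R$. The counts are $y_i\in\{0,1,2,\dots\}$, $M=\sum_i y_i$, and $n$ is the number of indices with $y_i\ge1$. Write $d_i=x_i-x_A$. Define $$g(a)=\sum_{i=1}^N y_i\frac{d_i}{1+a d_i}$$ for $a\notin\{-1/d_i: y_i\ge 1\}$; these excluded points are the poles of $g$. Define $$F(a)=1+\frac R2\Big(a-\frac{M}{g(a)}\Big)$$ wherever $g(a)$ is finite and nonzero. At poles of $g$, $F(a)=1+aR/2$ by continuity. Let $\lambda(a)=M/(R(1+aR/2))$ for $a\neq-2/R$. A zero $a^*$ of $F$ is called acceptable if $a^*\ne-2/R$ and $\lambda(a^* )(1+a^*d_i)\ge0$ for all $i$, i.e. the linear model $f(x)=\lambda(1+a(x-x_A))$ with $(a,\lambda)=(a^*,\lambda(a^* ))$ has non-negative Poisson means $\mu_i=f(x_i)\Delta x_i$ in every bin. *)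

theory Defs
  imports Complex_Main
begin

text \<open>Bins are indexed by i = 1..N; bin i has centre x i and width dx i.
  The bins tile [xA, xB] contiguously in increasing order: bin i is the
  interval [x i - dx i / 2, x i + dx i / 2].\<close>

definition bins_tile :: "nat \<Rightarrow> real \<Rightarrow> real \<Rightarrow> (nat \<Rightarrow> real) \<Rightarrow> (nat \<Rightarrow> real) \<Rightarrow> bool" where
  "bins_tile N xA xB x dx \<longleftrightarrow>
     (\<forall>i\<in>{1..N}. dx i > 0) \<and>
     x 1 - dx 1 / 2 = xA \<and>
     x N + dx N / 2 = xB \<and>
     (\<forall>i. 1 \<le> i \<and> i < N \<longrightarrow> x i + dx i / 2 = x (Suc i) - dx (Suc i) / 2)"

definition dd :: "real \<Rightarrow> (nat \<Rightarrow> real) \<Rightarrow> nat \<Rightarrow> real" where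
  "dd xA x i = x i - xA"

definition totM :: "nat \<Rightarrow> (nat \<Rightarrow> nat) \<Rightarrow> real" where
  "totM N y = (\<Sum>i=1..N. real (y i))"

definition nonempty_bins :: "nat \<Rightarrow> (nat \<Rightarrow> nat) \<Rightarrow> nat" where
  "nonempty_bins N y = card {i\<in>{1..N}. y i \<ge> 1}"

definition is_pole :: "nat \<Rightarrow> real \<Rightarrow> (nat \<Rightarrow> real) \<Rightarrow> (nat \<Rightarrow> nat) \<Rightarrow> real \<Rightarrow> bool" where
  "is_pole N xA x y a \<longleftrightarrow> (\<exists>i\<in>{1..N}. y i \<ge> 1 \<and> a = - 1 / dd xA x i)"

definition gfun :: "nat \<Rightarrow> real \<Rightarrow> (nat \<Rightarrow> real) \<Rightarrow> (nat \<Rightarrow> nat) \<Rightarrow> real \<Rightarrow> real" where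
  "gfun N xA x y a = (\<Sum>i=1..N. real (y i) * dd xA x i / (1 + a * dd xA x i))"

definition g_zero :: "nat \<Rightarrow> real \<Rightarrow> (nat \<Rightarrow> real) \<Rightarrow> (nat \<Rightarrow> nat) \<Rightarrow> real \<Rightarrow> bool" where
  "g_zero N xA x y a \<longleftrightarrow> \<not> is_pole N xA x y a \<and> gfun N xA x y a = 0"

text \<open>F is defined at poles of g (by continuity) and where g is finite and nonzero.\<close>
definition F_defined :: "nat \<Rightarrow> real \<Rightarrow> (nat \<Rightarrow> real) \<Rightarrow> (nat \<Rightarrow> nat) \<Rightarrow> real \<Rightarrow> bool" where
  "F_defined N xA x y a \<longleftrightarrow> is_pole N xA x y a \<or> gfun N xA x y a \<noteq> 0"

definition Ffun :: "nat \<Rightarrow> real \<Rightarrow> real \<Rightarrow> (nat \<Rightarrow> real) \<Rightarrow> (nat \<Rightarrow> nat) \<Rightarrow> real \<Rightarrow> real" where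
  "Ffun N xA xB x y a =
     (if is_pole N xA x y a then 1 + a * (xB - xA) / 2
      else 1 + (xB - xA) / 2 * (a - totM N y / gfun N xA x y a))"

definition F_zero :: "nat \<Rightarrow> real \<Rightarrow> real \<Rightarrow> (nat \<Rightarrow> real) \<Rightarrow> (nat \<Rightarrow> nat) \<Rightarrow> real \<Rightarrow> bool" where
  "F_zero N xA xB x y a \<longleftrightarrow> F_defined N xA x y a \<and> Ffun N xA xB x y a = 0"

definition lam :: "nat \<Rightarrow> real \<Rightarrow> real \<Rightarrow> (nat \<Rightarrow> nat) \<Rightarrow> real \<Rightarrow> real" where
  "lam N xA xB y a = totM N y / ((xB - xA) * (1 + a * (xB - xA) / 2))"

definition acceptable :: "nat \<Rightarrow> real \<Rightarrow> real \<Rightarrow> (nat \<Rightarrow> real) \<Rightarrow> (nat \<Rightarrow> nat) \<Rightarrow> real \<Rightarrow> bool" where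
  "acceptable N xA xB x y a \<longleftrightarrow>
     a \<noteq> - 2 / (xB - xA) \<and>
     (\<forall>i\<in>{1..N}. lam N xA xB y a * (1 + a * dd xA x i) \<ge> 0)"

end

theory Submission
  imports Defs
begin

lemma x_step:
  assumes "bins_tile N xA xB x dx" "1 \<le> i" "i < N"
  shows "x i < x (Suc i)"
proof -
  have "dx i > 0" "dx (Suc i) > 0" using assms unfolding bins_tile_def by auto
  moreover have "x i + dx i / 2 = x (Suc i) - dx (Suc i) / 2"
    using assms unfolding bins_tile_def by auto
  ultimately show ?thesis by linarith
qed

lemma x_mono:
  assumes "bins_tile N xA xB x dx" "1 \<le> i" "i \<le> j" "j \<le> N"
  shows "x i \<le> x j"
  using assms(3,4)
proof (induction j rule: dec_induct)
  case base then show ?case by simp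
next
  case (step k)
  then have "x i \<le> x k" by simp
  moreover have "x k < x (Suc k)" using x_step[OF assms(1)] step assms(2) by simp
  ultimately show ?case by simp
qed

lemma d_props:
  assumes "bins_tile N xA xB x dx" "N \<ge> 1" "i \<in> {1..N}"
  shows "dd xA x 1 \<le> dd xA x i" "dd xA x i \<le> dd xA x N" "dd xA x 1 > 0"
proof -
  show "dd xA x 1 \<le> dd xA x i" using x_mono[OF assms(1), of 1 i] assms by (simp add: dd_def)
  show "dd xA x i \<le> dd xA x N" using x_mono[OF assms(1), of i N] assms by (simp add: dd_def)
  have "dx 1 > 0" "x 1 - dx 1 / 2 = xA" using assms unfolding bins_tile_def by auto
  then show "dd xA x 1 > 0" by (simp add: dd_def)
qed

theorem mainTheorem8:
  fixes N :: nat and xA xB :: real and x dx :: "nat \<Rightarrow> real" and y :: "nat \<Rightarrow> nat"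
    and a z1 z2 :: real
  assumes "N \<ge> 2" and "xA < xB"
    and "bins_tile N xA xB x dx"
    and "nonempty_bins N y \<ge> 3"
    and "F_zero N xA xB x y a"
    and "g_zero N xA x y z1" and "g_zero N xA x y z2"
    and "z1 < a" and "a < z2"
  shows "\<not> acceptable N xA xB x y a"
proof
  assume acc: "acceptable N xA xB x y a"
  define d where "d = dd xA x"
  have N1: "N \<ge> 1" using assms(1) by simp
  have dlo: "\<And>i. i \<in> {1..N} \<Longrightarrow> d 1 \<le> d i" and dhi: "\<And>i. i \<in> {1..N} \<Longrightarrow> d i \<le> d N"
    using d_props[OF assms(3) N1] unfolding d_def by auto
  have d1: "d 1 > 0" using d_props[OF assms(3) N1, of 1] N1 unfolding d_def by auto
  have dpos: "\<And>i. i \<in> {1..N} \<Longrightarrow> d i > 0" using dlo d1 by force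
  have "{i\<in>{1..N}. y i \<ge> 1} \<noteq> {}" using assms(4) unfolding nonempty_bins_def by (metis card.empty not_numeral_le_zero)
  then obtain k where k: "k \<in> {1..N}" "y k \<ge> 1" by blast
  define t where "t = (\<lambda>z i. real (y i) * d i / (1 + z * d i))"
  have gsum: "gfun N xA x y z = sum (t z) {1..N}" for z unfolding gfun_def t_def d_def by simp
  have sumsplit: "sum (t z) {1..N} = t z k + sum (t z) ({1..N} - {k})" for z
    using k by (simp add: sum.remove)
  have nonpole: "\<And>i z. g_zero N xA x y z \<Longrightarrow> i \<in> {1..N} \<Longrightarrow> y i \<ge> 1 \<Longrightarrow> 1 + z * d i \<noteq> 0"
  proof
    fix i z assume g: "g_zero N xA x y z" and i: "i \<in> {1..N}" "y i \<ge> 1" and e: "1 + z * d i = 0"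
    have "d i > 0" using dpos i by simp
    then have "z = - 1 / d i" using e by (simp add: field_simps)
    then have "is_pole N xA x y z" unfolding is_pole_def d_def using i by blast
    then show False using g unfolding g_zero_def by simp
  qed
  have z1b: "1 + z1 * d 1 > 0"
  proof (rule ccontr)
    assume c: "\<not> 1 + z1 * d 1 > 0"
    have den: "1 + z1 * d i \<le> 0" if "i \<in> {1..N}" for i
    proof -
      have "z1 \<le> 0" using c d1 by (smt (verit) mult_pos_pos)
      then have "z1 * d i \<le> z1 * d 1" using dlo[OF that] by (simp add: mult_left_mono_neg)
      then show ?thesis using c by simp
    qed
    have tn: "t z1 i \<le> 0" if "i \<in> {1..N}" for i
      unfolding t_def using den[OF that] dpos[OF that]
      by (simp add: divide_nonneg_nonpos)
    have "1 + z1 * d k < 0" using den[OF k(1)] nonpole[OF assms(6) k] by simp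
    then have "t z1 k < 0" unfolding t_def using dpos[OF k(1)] k(2)
      by (simp add: divide_pos_neg)
    moreover have "sum (t z1) ({1..N} - {k}) \<le> 0" by (rule sum_nonpos) (use tn in auto)
    ultimately have "gfun N xA x y z1 < 0" using gsum sumsplit by simp
    then show False using assms(6) unfolding g_zero_def by simp
  qed
  have z2b: "1 + z2 * d N < 0"
  proof (rule ccontr)
    assume c: "\<not> 1 + z2 * d N < 0"
    have den: "1 + z2 * d i \<ge> 0" if "i \<in> {1..N}" for i
    proof (cases "z2 \<ge> 0")
      case True then show ?thesis using dpos[OF that] by simp
    next
      case False
      then have "z2 * d N \<le> z2 * d i" using dhi[OF that] by (simp add: mult_left_mono_neg)
      then show ?thesis using c by simp
    qed
    have tn: "t z2 i \<ge> 0" if "i \<in> {1..N}" for i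
      unfolding t_def using den[OF that] dpos[OF that] by simp
    have "1 + z2 * d k > 0" using den[OF k(1)] nonpole[OF assms(7) k] by simp
    then have "t z2 k > 0" unfolding t_def using dpos[OF k(1)] k(2) by simp
    moreover have "sum (t z2) ({1..N} - {k}) \<ge> 0" by (rule sum_nonneg) (use tn in auto)
    ultimately have "gfun N xA x y z2 > 0" using gsum sumsplit by simp
    then show False using assms(7) unfolding g_zero_def by simp
  qed
  have p1: "1 + a * d 1 > 0" using z1b assms(8) d1
    by (smt (verit) mult_strict_right_mono)
  have pN: "1 + a * d N < 0" using z2b assms(9) dpos[of N] N1
    by (smt (verit) atLeastAtMost_iff mult_strict_right_mono order_refl)
  define L where "L = lam N xA xB y a"
  have "L * (1 + a * d 1) \<ge> 0" "L * (1 + a * d N) \<ge> 0"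
    using acc N1 unfolding acceptable_def L_def d_def by auto
  then have L0: "L = 0" using p1 pN
    by (smt (verit) mult_neg_pos mult_pos_neg zero_less_mult_iff)
  have ne: "a \<noteq> - 2 / (xB - xA)" using acc unfolding acceptable_def by simp
  have "1 + a * (xB - xA) / 2 \<noteq> 0"
  proof
    assume "1 + a * (xB - xA) / 2 = 0"
    then have "a = - 2 / (xB - xA)" using assms(2) by (simp add: field_simps)
    then show False using ne by simp
  qed
  moreover have "totM N y > 0"
  proof -
    have "totM N y = real (y k) + (\<Sum>i\<in>{1..N} - {k}. real (y i))"
      unfolding totM_def using k by (simp add: sum.remove)
    moreover have "(\<Sum>i\<in>{1..N} - {k}. real (y i)) \<ge> 0" by (rule sum_nonneg) auto
    ultimately show ?thesis using k(2) by simp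
  qed
  ultimately have "L \<noteq> 0" unfolding L_def lam_def using assms(2) by simp
  then show False using L0 by simp
qed

end
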